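(* Let $n\ge 1$, let $\mu,\nu\in\mathbb{R}^n$ be probability vectors, let $\gamma>0$, and let $\phi$ satisfy the Bregman assumption stated in the context. Then for every $\hat X\in\mathcal{T}_\phi(\mu,\nu)$ there exists $C\in\mathbb{R}_+^{n\times n}$ with $\mathcal{F}(C)=\hat X$; that is, the map $\mathcal{F}:\mathbb{R}_+^{n\times n}\to\mathcal{T}_\phi(\mu,\nu)$ is a surjection.
   Context: Probability vectors are vectors with nonnegative entries summing to $1$. $\mathcal{U}(\mu,\nu):=\{X\in\mathbb{R}_+^{n\times n}: X\mathbf{1}=\mu,\ X^\top\mathbf{1}=\nu\}$. Bregman assumption on $\phi:\mathbb{R}\to(-\infty,+\infty]$: its effective domain $I=\operatorname{dom}\phi$ is an interval with $(0,1)\subseteq\operatorname{int}(I)$; $\phi$ is of Legendre type (proper, closed, strictly convex on $\operatorname{int}(\operatorname{dom}\phi)$, and essentially smooth, i.e. differentiable on the nonempty interior of its domain with $|\phi'(x_k)|\to\infty$ whenever $x_k\in\operatorname{int}(\operatorname{dom}\phi)$ converges to a boundary point of the domain); and $\phi$ is $C^1$ on $\operatorname{int}(I)$. For a matrix $X$ with entries in $I$, $\phi(X):=\sum_{i,j}\phi(X_{ij})$. For a cost matrix $C$, $\mathcal{F}(C):=\arg\min_{X\in\mathcal{U}(\mu,\nu)}\{\langle C,X\rangle+\gamma\phi(X)\}$ (the unique minimizer). Set $\phi'_0:=\lim_{x\to0^+}\phi'(x)$ and $\phi'_1:=\lim_{x\to1^-}\phi'(x)$, with values in $[-\infty,+\infty]$.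 The target set is $\mathcal{T}_\phi(\mu,\nu):=\mathcal{U}(\mu,\nu)$ if $\phi'_0,\phi'_1$ are both finite; $\mathcal{U}(\mu,\nu)\cap(0,1]^{n\times n}$ if $\phi'_0=-\infty$ and $\phi'_1$ is finite; $\mathcal{U}(\mu,\nu)\cap[0,1)^{n\times n}$ if $\phi'_0$ is finite and $\phi'_1=+\infty$; $\mathcal{U}(\mu,\nu)\cap(0,1)^{n\times n}$ if $\phi'_0=-\infty$ and $\phi'_1=+\infty$. *)

theory Defs
  imports "HOL-Analysis.Analysis"
begin

definition edom :: "(real \<Rightarrow> ereal) \<Rightarrow> real set" where
  "edom \<phi> = {x. \<phi> x \<noteq> \<infinity>}"

text \<open>Real part of phi (meaningful on its effective domain).\<close>
definition rphi :: "(real \<Rightarrow> ereal) \<Rightarrow> real \<Rightarrow> real" where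
  "rphi \<phi> = (\<lambda>x. real_of_ereal (\<phi> x))"

definition proper_fun :: "(real \<Rightarrow> ereal) \<Rightarrow> bool" where
  "proper_fun \<phi> \<longleftrightarrow> (\<forall>x. \<phi> x \<noteq> -\<infinity>) \<and> edom \<phi> \<noteq> {}"

definition closed_fun :: "(real \<Rightarrow> ereal) \<Rightarrow> bool" where
  "closed_fun \<phi> \<longleftrightarrow> closed {(x, t::real). \<phi> x \<le> ereal t}"

definition convex_fun :: "(real \<Rightarrow> ereal) \<Rightarrow> bool" where
  "convex_fun \<phi> \<longleftrightarrow> convex {(x, t::real). \<phi> x \<le> ereal t}"

definition strictly_convex_on_int_dom :: "(real \<Rightarrow> ereal) \<Rightarrow> bool" where
  "strictly_convex_on_int_dom \<phi> \<longleftrightarrow>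
     (\<forall>x\<in>interior (edom \<phi>). \<forall>y\<in>interior (edom \<phi>). x \<noteq> y \<longrightarrow>
        (\<forall>u::real. 0 < u \<and> u < 1 \<longrightarrow>
           rphi \<phi> (u * x + (1 - u) * y) < u * rphi \<phi> x + (1 - u) * rphi \<phi> y))"

definition essentially_smooth :: "(real \<Rightarrow> ereal) \<Rightarrow> bool" where
  "essentially_smooth \<phi> \<longleftrightarrow>
     interior (edom \<phi>) \<noteq> {} \<and>
     (\<forall>x\<in>interior (edom \<phi>). rphi \<phi> differentiable (at x)) \<and>
     (\<forall>b\<in>frontier (edom \<phi>). \<forall>s::nat \<Rightarrow> real.
        (\<forall>k. s k \<in> interior (edom \<phi>)) \<longrightarrow> s \<longlonglongrightarrow> b \<longrightarrow>
        filterlim (\<lambda>k. \<bar>deriv (rphi \<phi>) (s k)\<bar>) at_top sequentially)"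

definition legendre_type :: "(real \<Rightarrow> ereal) \<Rightarrow> bool" where
  "legendre_type \<phi> \<longleftrightarrow> proper_fun \<phi> \<and> closed_fun \<phi> \<and> convex_fun \<phi> \<and>
     strictly_convex_on_int_dom \<phi> \<and> essentially_smooth \<phi>"

definition bregman_assumption :: "(real \<Rightarrow> ereal) \<Rightarrow> bool" where
  "bregman_assumption \<phi> \<longleftrightarrow>
     is_interval (edom \<phi>) \<and> {0<..<1} \<subseteq> interior (edom \<phi>) \<and>
     legendre_type \<phi> \<and>
     continuous_on (interior (edom \<phi>)) (deriv (rphi \<phi>)) \<and>
     (\<forall>x\<in>interior (edom \<phi>). rphi \<phi> differentiable (at x))"

definition dphi0 :: "(real \<Rightarrow> ereal) \<Rightarrow> ereal" where
  "dphi0 \<phi> = Lim (at_right 0) (\<lambda>x. ereal (deriv (rphi \<phi>) x))"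

definition dphi1 :: "(real \<Rightarrow> ereal) \<Rightarrow> ereal" where
  "dphi1 \<phi> = Lim (at_left 1) (\<lambda>x. ereal (deriv (rphi \<phi>) x))"

definition prob_vec :: "('n::finite \<Rightarrow> real) \<Rightarrow> bool" where
  "prob_vec p \<longleftrightarrow> (\<forall>i. 0 \<le> p i) \<and> (\<Sum>i\<in>UNIV. p i) = 1"

definition transport_polytope ::
    "('n::finite \<Rightarrow> real) \<Rightarrow> ('n \<Rightarrow> real) \<Rightarrow> ('n \<Rightarrow> 'n \<Rightarrow> real) set" where
  "transport_polytope \<mu> \<nu> = {X. (\<forall>i j. 0 \<le> X i j) \<and>
      (\<forall>i. (\<Sum>j\<in>UNIV. X i j) = \<mu> i) \<and> (\<forall>j. (\<Sum>i\<in>UNIV. X i j) = \<nu> j)}"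

text \<open>Objective <C,X> + gamma * phi(X), with value +infinity if some entry lies
  outside dom phi.\<close>
definition reg_obj ::
    "(real \<Rightarrow> ereal) \<Rightarrow> real \<Rightarrow> ('n::finite \<Rightarrow> 'n \<Rightarrow> real) \<Rightarrow> ('n \<Rightarrow> 'n \<Rightarrow> real) \<Rightarrow> ereal" where
  "reg_obj \<phi> \<gamma> C X = ereal (\<Sum>i\<in>UNIV. \<Sum>j\<in>UNIV. C i j * X i j)
      + ereal \<gamma> * (\<Sum>i\<in>UNIV. \<Sum>j\<in>UNIV. \<phi> (X i j))"

definition Fmap ::
    "(real \<Rightarrow> ereal) \<Rightarrow> real \<Rightarrow> ('n::finite \<Rightarrow> real) \<Rightarrow> ('n \<Rightarrow> real)
      \<Rightarrow> ('n \<Rightarrow> 'n \<Rightarrow> real) \<Rightarrow> ('n \<Rightarrow> 'n \<Rightarrow> real)" where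
  "Fmap \<phi> \<gamma> \<mu> \<nu> C = (THE X. X \<in> transport_polytope \<mu> \<nu> \<and>
      (\<forall>Y\<in>transport_polytope \<mu> \<nu>. reg_obj \<phi> \<gamma> C X \<le> reg_obj \<phi> \<gamma> C Y))"

definition target_set ::
    "(real \<Rightarrow> ereal) \<Rightarrow> ('n::finite \<Rightarrow> real) \<Rightarrow> ('n \<Rightarrow> real) \<Rightarrow> ('n \<Rightarrow> 'n \<Rightarrow> real) set" where
  "target_set \<phi> \<mu> \<nu> =
     (if \<bar>dphi0 \<phi>\<bar> \<noteq> \<infinity> \<and> \<bar>dphi1 \<phi>\<bar> \<noteq> \<infinity> then transport_polytope \<mu> \<nu>
      else if dphi0 \<phi> = -\<infinity> \<and> \<bar>dphi1 \<phi>\<bar> \<noteq> \<infinity> then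
        transport_polytope \<mu> \<nu> \<inter> {X. \<forall>i j. 0 < X i j \<and> X i j \<le> 1}
      else if \<bar>dphi0 \<phi>\<bar> \<noteq> \<infinity> \<and> dphi1 \<phi> = \<infinity> then
        transport_polytope \<mu> \<nu> \<inter> {X. \<forall>i j. 0 \<le> X i j \<and> X i j < 1}
      else if dphi0 \<phi> = -\<infinity> \<and> dphi1 \<phi> = \<infinity> then
        transport_polytope \<mu> \<nu> \<inter> {X. \<forall>i j. 0 < X i j \<and> X i j < 1}
      else {})"

end

theory Submission
  imports Defs
begin

lemma tangent_le:
  fixes f :: "real \<Rightarrow> real"
  assumes S: "convex S" and xS: "x \<in> S" and yS: "y \<in> S"
    and cvx: "\<And>a b u. a \<in> S \<Longrightarrow> b \<in> S \<Longrightarrow> 0 < u \<Longrightarrow> u < 1 \<Longrightarrow>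
                 f (u * a + (1 - u) * b) \<le> u * f a + (1 - u) * f b"
    and D: "(f has_real_derivative d) (at x)"
  shows "d * (y - x) \<le> f y - f x"
proof -
  define h where "h = (\<lambda>t. f (x + t * (y - x)))"
  have g: "((\<lambda>t. x + t * (y - x)) has_real_derivative (y - x)) (at 0)"
    by (auto intro!: derivative_eq_intros)
  have f': "(f has_real_derivative d) (at ((\<lambda>t. x + t * (y - x)) 0))" using D by simp
  have "((\<lambda>t. f ((\<lambda>t. x + t * (y - x)) t)) has_real_derivative d * (y - x)) (at 0)"
    by (rule DERIV_chain2[OF f' g])
  hence "(h has_real_derivative d * (y - x)) (at 0)" by (simp add: h_def)
  hence "((\<lambda>t. (h t - h 0) / (t - 0)) \<longlongrightarrow> d * (y - x)) (at 0)"
    by (simp add: has_field_derivative_iff)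
  hence L: "((\<lambda>t. (h t - h 0) / (t - 0)) \<longlongrightarrow> d * (y - x)) (at_right 0)"
    by (rule tendsto_mono[OF at_le, rotated]) simp
  have ev: "eventually (\<lambda>t. (h t - h 0) / (t - 0) \<le> f y - f x) (at_right 0)"
    unfolding eventually_at_right_field
  proof (intro exI[of _ 1] conjI allI impI)
    fix t :: real assume t: "0 < t" "t < 1"
    have "h t = f (t * y + (1 - t) * x)" unfolding h_def by (simp add: algebra_simps)
    also have "\<dots> \<le> t * f y + (1 - t) * f x" using cvx[OF yS xS t] .
    finally have "h t - h 0 \<le> t * (f y - f x)" unfolding h_def by (simp add: algebra_simps)
    thus "(h t - h 0) / (t - 0) \<le> f y - f x" using t by (simp add: divide_le_eq mult.commute)
  qed simp
  show ?thesis
    by (rule tendsto_le[OF trivial_limit_at_right_real tendsto_const L ev])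
qed

lemma ba_convex:
  assumes "bregman_assumption \<phi>"
  shows "convex (edom \<phi>)" "convex (interior (edom \<phi>))" "{0<..<1} \<subseteq> interior (edom \<phi>)"
    "is_interval (edom \<phi>)"
proof -
  have i: "is_interval (edom \<phi>)" and s: "{0<..<1} \<subseteq> interior (edom \<phi>)"
    using assms unfolding bregman_assumption_def by blast+
  have c: "convex (edom \<phi>)" by (rule is_interval_convex[OF i])
  show "convex (edom \<phi>)" "convex (interior (edom \<phi>))" "{0<..<1} \<subseteq> interior (edom \<phi>)"
    "is_interval (edom \<phi>)" using c convex_interior i s by blast+
qed

lemma phi_eq:
  assumes "bregman_assumption \<phi>" "x \<in> edom \<phi>"
  shows "\<phi> x = ereal (rphi \<phi> x)"
proof -
  have "\<phi> x \<noteq> -\<infinity>" using assms(1)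
    unfolding bregman_assumption_def legendre_type_def proper_fun_def by auto
  moreover have "\<phi> x \<noteq> \<infinity>" using assms(2) unfolding edom_def by auto
  ultimately show ?thesis unfolding rphi_def by (cases "\<phi> x") auto
qed

lemma mid_interior:
  fixes S :: "real set"
  assumes "is_interval S" "x \<in> S" "y \<in> S" "x \<noteq> y"
  shows "(x + y) / 2 \<in> interior S"
proof -
  have sub: "{min x y<..<max x y} \<subseteq> S"
  proof
    fix z assume z: "z \<in> {min x y<..<max x y}"
    have a: "min x y \<in> S" "max x y \<in> S" using assms(2,3) by (simp_all add: min_def max_def)
    show "z \<in> S" using assms(1) a z unfolding is_interval_1
      by (meson greaterThanLessThan_iff less_imp_le)
  qed
  have "{min x y<..<max x y} \<subseteq> interior S"
    by (rule interior_maximal[OF sub]) simp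
  moreover have "(x + y) / 2 \<in> {min x y<..<max x y}" using assms(4)
    by (auto simp: min_def max_def)
  ultimately show ?thesis by blast
qed

lemma mid_le:
  assumes B: "bregman_assumption \<phi>" and x: "x \<in> edom \<phi>" and y: "y \<in> edom \<phi>"
  shows "rphi \<phi> ((x + y) / 2) \<le> (rphi \<phi> x + rphi \<phi> y) / 2"
proof -
  define E where "E = {(x, t::real). \<phi> x \<le> ereal t}"
  have cE: "convex E" using B unfolding E_def bregman_assumption_def legendre_type_def convex_fun_def
    by auto
  have "(x, rphi \<phi> x) \<in> E" "(y, rphi \<phi> y) \<in> E"
    using phi_eq[OF B x] phi_eq[OF B y] unfolding E_def by auto
  from convexD[OF cE this, of "1/2" "1/2"]
  have "((x + y) / 2, (rphi \<phi> x + rphi \<phi> y) / 2) \<in> E"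
    by (simp add: scaleR_Pair add_divide_distrib)
  hence le: "\<phi> ((x + y) / 2) \<le> ereal ((rphi \<phi> x + rphi \<phi> y) / 2)" unfolding E_def by simp
  hence md: "(x + y) / 2 \<in> edom \<phi>" unfolding edom_def by auto
  from le show ?thesis unfolding phi_eq[OF B md] by simp
qed

lemma has_deriv_int:
  assumes B: "bregman_assumption \<phi>" and x: "x \<in> interior (edom \<phi>)"
  shows "(rphi \<phi> has_real_derivative deriv (rphi \<phi>) x) (at x)"
  using B x unfolding bregman_assumption_def
  by (simp add: DERIV_deriv_iff_real_differentiable)

lemma strict_cvx_int:
  assumes B: "bregman_assumption \<phi>" and "a \<in> interior (edom \<phi>)" "b \<in> interior (edom \<phi>)"
    "a \<noteq> b" "0 < u" "u < 1"
  shows "rphi \<phi> (u * a + (1 - u) * b) < u * rphi \<phi> a + (1 - u) * rphi \<phi> b"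
  using assms unfolding bregman_assumption_def legendre_type_def strictly_convex_on_int_dom_def
  by blast

lemma tangent_int:
  assumes B: "bregman_assumption \<phi>" and x: "x \<in> interior (edom \<phi>)" and y: "y \<in> interior (edom \<phi>)"
  shows "deriv (rphi \<phi>) x * (y - x) \<le> rphi \<phi> y - rphi \<phi> x"
proof (rule tangent_le[OF ba_convex(2)[OF B] x y _ has_deriv_int[OF B x]])
  fix a b u :: real
  assume h: "a \<in> interior (edom \<phi>)" "b \<in> interior (edom \<phi>)" "0 < u" "u < 1"
  show "rphi \<phi> (u * a + (1 - u) * b) \<le> u * rphi \<phi> a + (1 - u) * rphi \<phi> b"
  proof (cases "a = b")
    case True
    have "u * a + (1 - u) * b = a" using True by (simp add: algebra_simps)
    thus ?thesis using True by (simp add: algebra_simps)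
  next
    case False
    thus ?thesis using strict_cvx_int[OF B h(1,2) False h(3,4)] by simp
  qed
qed

lemma strict_int:
  assumes B: "bregman_assumption \<phi>" and x: "x \<in> interior (edom \<phi>)" and y: "y \<in> interior (edom \<phi>)"
    and ne: "x \<noteq> y"
  shows "deriv (rphi \<phi>) x * (y - x) < rphi \<phi> y - rphi \<phi> x"
proof -
  define m where "m = (1/2) * x + (1 - 1/2) * y"
  have m: "m \<in> interior (edom \<phi>)"
    using convexD[OF ba_convex(2)[OF B] x y, of "1/2" "1/2"] unfolding m_def by simp
  have "rphi \<phi> m < (1/2) * rphi \<phi> x + (1 - 1/2) * rphi \<phi> y"
    unfolding m_def by (rule strict_cvx_int[OF B x y ne]) auto
  moreover have "deriv (rphi \<phi>) x * (m - x) \<le> rphi \<phi> m - rphi \<phi> x"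
    by (rule tangent_int[OF B x m])
  moreover have "m - x = (y - x) / 2" unfolding m_def by (simp add: field_simps)
  ultimately show ?thesis by (simp add: field_simps)
qed

lemma strict_dom:
  assumes B: "bregman_assumption \<phi>" and x: "x \<in> interior (edom \<phi>)" and y: "y \<in> edom \<phi>"
    and ne: "y \<noteq> x"
  shows "deriv (rphi \<phi>) x * (y - x) < rphi \<phi> y - rphi \<phi> x"
proof -
  have xD: "x \<in> edom \<phi>" using x interior_subset by blast
  define m where "m = (x + y) / 2"
  have m: "m \<in> interior (edom \<phi>)" unfolding m_def
    by (rule mid_interior[OF ba_convex(4)[OF B] xD y]) (use ne in auto)
  have "m \<noteq> x" using ne unfolding m_def by auto
  have "deriv (rphi \<phi>) x * (m - x) < rphi \<phi> m - rphi \<phi> x"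
    by (rule strict_int[OF B x m]) (use \<open>m \<noteq> x\<close> in auto)
  moreover have "rphi \<phi> m \<le> (rphi \<phi> x + rphi \<phi> y) / 2"
    unfolding m_def by (rule mid_le[OF B xD y])
  moreover have "m - x = (y - x) / 2" unfolding m_def by (simp add: field_simps)
  ultimately show ?thesis by (simp add: field_simps)
qed

lemma deriv_mono:
  assumes B: "bregman_assumption \<phi>" and x: "x \<in> interior (edom \<phi>)" and y: "y \<in> interior (edom \<phi>)"
    and le: "x \<le> y"
  shows "deriv (rphi \<phi>) x \<le> deriv (rphi \<phi>) y"
proof (cases "x = y")
  case False
  hence lt: "x < y" using le by simp
  have 1: "deriv (rphi \<phi>) x * (y - x) \<le> rphi \<phi> y - rphi \<phi> x" by (rule tangent_int[OF B x y])
  have 2: "deriv (rphi \<phi>) y * (x - y) \<le> rphi \<phi> x - rphi \<phi> y" by (rule tangent_int[OF B y x])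
  from 1 2 have "(deriv (rphi \<phi>) x - deriv (rphi \<phi>) y) * (y - x) \<le> 0"
    by (simp add: algebra_simps)
  thus ?thesis using lt by (simp add: mult_le_0_iff)
qed simp


lemma frontier_smooth:
  assumes B: "bregman_assumption \<phi>" and b: "b \<in> frontier (edom \<phi>)"
    and s: "\<And>k. s k \<in> interior (edom \<phi>)" and lim: "s \<longlonglongrightarrow> b"
  shows "filterlim (\<lambda>k. \<bar>deriv (rphi \<phi>) (s k)\<bar>) at_top sequentially"
  using B b s lim unfolding bregman_assumption_def legendre_type_def essentially_smooth_def
  by blast

lemma zero_int:
  assumes B: "bregman_assumption \<phi>" and fin: "\<bar>dphi0 \<phi>\<bar> \<noteq> \<infinity>"
  shows "0 \<in> interior (edom \<phi>)"
proof (rule ccontr)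
  assume n0: "0 \<notin> interior (edom \<phi>)"
  let ?I = "interior (edom \<phi>)"
  let ?d = "deriv (rphi \<phi>)"
  have sub: "{0<..<1} \<subseteq> ?I" by (rule ba_convex(3)[OF B])
  hence "{0<..<1} \<subseteq> edom \<phi>" using interior_subset by blast
  hence "closure {0<..<(1::real)} \<subseteq> closure (edom \<phi>)" by (rule closure_mono)
  hence "0 \<in> closure (edom \<phi>)" by auto
  hence fr: "0 \<in> frontier (edom \<phi>)" using n0 unfolding frontier_def by blast
  define s where "s = (\<lambda>k::nat. inverse (real (Suc (Suc k))))"
  have s01: "0 < s k" "s k \<le> 1/2" for k unfolding s_def by (auto simp: field_simps)
  have sI: "s k \<in> ?I" for k using s01[of k] sub by force
  have "(\<lambda>k. inverse (real (Suc k))) \<longlonglongrightarrow> 0" by (rule LIMSEQ_inverse_real_of_nat)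
  hence slim: "s \<longlonglongrightarrow> 0" unfolding s_def by (rule LIMSEQ_Suc)
  have fl: "filterlim (\<lambda>k. \<bar>?d (s k)\<bar>) at_top sequentially"
    by (rule frontier_smooth[OF B fr sI slim])
  have hI: "1/2 \<in> ?I" using sub by auto
  have "((\<lambda>x. ereal (?d x)) \<longlongrightarrow> -\<infinity>) (at_right 0)"
    unfolding tendsto_MInfty
  proof
    fix r :: real
    from fl have "eventually (\<lambda>k. \<bar>r\<bar> + \<bar>?d (1/2)\<bar> + 1 \<le> \<bar>?d (s k)\<bar>) sequentially"
      unfolding filterlim_at_top by blast
    then obtain N where N: "\<bar>r\<bar> + \<bar>?d (1/2)\<bar> + 1 \<le> \<bar>?d (s N)\<bar>"
      unfolding eventually_sequentially by blast
    have "?d (s N) \<le> ?d (1/2)" by (rule deriv_mono[OF B sI hI s01(2)])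
    with N have dN: "?d (s N) < r" by linarith
    show "eventually (\<lambda>x. ereal (?d x) < ereal r) (at_right 0)"
      unfolding eventually_at_right_field
    proof (intro exI[of _ "s N"] conjI allI impI)
      fix y :: real assume y: "0 < y" "y < s N"
      have "y \<in> ?I" using y s01[of N] sub by force
      hence "?d y \<le> ?d (s N)" using deriv_mono[OF B _ sI] y by simp
      thus "ereal (?d y) < ereal r" using dN by simp
    qed (use s01 in auto)
  qed
  hence "dphi0 \<phi> = -\<infinity>" unfolding dphi0_def
    by (intro tendsto_Lim) simp_all
  with fin show False by simp
qed

lemma one_int:
  assumes B: "bregman_assumption \<phi>" and fin: "\<bar>dphi1 \<phi>\<bar> \<noteq> \<infinity>"
  shows "1 \<in> interior (edom \<phi>)"
proof (rule ccontr)
  assume n0: "1 \<notin> interior (edom \<phi>)"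
  let ?I = "interior (edom \<phi>)"
  let ?d = "deriv (rphi \<phi>)"
  have sub: "{0<..<1} \<subseteq> ?I" by (rule ba_convex(3)[OF B])
  hence "{0<..<1} \<subseteq> edom \<phi>" using interior_subset by blast
  hence "closure {0<..<(1::real)} \<subseteq> closure (edom \<phi>)" by (rule closure_mono)
  hence "1 \<in> closure (edom \<phi>)" by auto
  hence fr: "1 \<in> frontier (edom \<phi>)" using n0 unfolding frontier_def by blast
  define s where "s = (\<lambda>k::nat. 1 - inverse (real (Suc (Suc k))))"
  have s01: "s k < 1" "1/2 \<le> s k" for k unfolding s_def by (auto simp: field_simps)
  have sI: "s k \<in> ?I" for k using s01[of k] sub by force
  have "(\<lambda>k. inverse (real (Suc k))) \<longlonglongrightarrow> 0" by (rule LIMSEQ_inverse_real_of_nat)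
  hence "(\<lambda>k. inverse (real (Suc (Suc k)))) \<longlonglongrightarrow> 0" by (rule LIMSEQ_Suc)
  hence "(\<lambda>k. 1 - inverse (real (Suc (Suc k)))) \<longlonglongrightarrow> 1 - 0" by (intro tendsto_intros)
  hence slim: "s \<longlonglongrightarrow> 1" unfolding s_def by simp
  have fl: "filterlim (\<lambda>k. \<bar>?d (s k)\<bar>) at_top sequentially"
    by (rule frontier_smooth[OF B fr sI slim])
  have hI: "1/2 \<in> ?I" using sub by auto
  have "((\<lambda>x. ereal (?d x)) \<longlongrightarrow> \<infinity>) (at_left 1)"
    unfolding tendsto_PInfty
  proof
    fix r :: real
    from fl have "eventually (\<lambda>k. \<bar>r\<bar> + \<bar>?d (1/2)\<bar> + 1 \<le> \<bar>?d (s k)\<bar>) sequentially"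
      unfolding filterlim_at_top by blast
    then obtain N where N: "\<bar>r\<bar> + \<bar>?d (1/2)\<bar> + 1 \<le> \<bar>?d (s N)\<bar>"
      unfolding eventually_sequentially by blast
    have "?d (1/2) \<le> ?d (s N)" by (rule deriv_mono[OF B hI sI s01(2)])
    with N have dN: "r < ?d (s N)" by linarith
    show "eventually (\<lambda>x. ereal r < ereal (?d x)) (at_left 1)"
      unfolding eventually_at_left_field
    proof (intro exI[of _ "s N"] conjI allI impI)
      fix y :: real assume y: "s N < y" "y < 1"
      have "y \<in> ?I" using y s01[of N] sub by force
      hence "?d (s N) \<le> ?d y" using deriv_mono[OF B sI] y by simp
      thus "ereal r < ereal (?d y)" using dN by simp
    qed (use s01 in auto)
  qed
  hence "dphi1 \<phi> = \<infinity>" unfolding dphi1_def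
    by (intro tendsto_Lim) simp_all
  with fin show False by simp
qed


lemma entries_01:
  assumes mu: "prob_vec \<mu>" and X: "X \<in> transport_polytope \<mu> \<nu>"
  shows "0 \<le> X i j \<and> X i j \<le> 1"
proof -
  have nn: "\<forall>i j. 0 \<le> X i j" and row: "(\<Sum>j\<in>UNIV. X i j) = \<mu> i"
    using X unfolding transport_polytope_def by auto
  have "X i j \<le> (\<Sum>j\<in>UNIV. X i j)" by (rule member_le_sum) (use nn in auto)
  also have "\<dots> = \<mu> i" by (rule row)
  also have "\<dots> \<le> (\<Sum>i\<in>UNIV. \<mu> i)" by (rule member_le_sum) (use mu in \<open>auto simp: prob_vec_def\<close>)
  also have "\<dots> = 1" using mu by (simp add: prob_vec_def)
  finally show ?thesis using nn by auto
qed

lemma target_int: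
  assumes B: "bregman_assumption \<phi>" and mu: "prob_vec \<mu>" and X: "X \<in> target_set \<phi> \<mu> \<nu>"
  shows "X \<in> transport_polytope \<mu> \<nu>" "X i j \<in> interior (edom \<phi>)"
proof -
  show XU: "X \<in> transport_polytope \<mu> \<nu>" using X unfolding target_set_def
    by (auto split: if_splits)
  have sub: "{0<..<1} \<subseteq> interior (edom \<phi>)" by (rule ba_convex(3)[OF B])
  have e: "0 \<le> X i j" "X i j \<le> 1" using entries_01[OF mu XU] by auto
  show "X i j \<in> interior (edom \<phi>)"
  proof (cases "X i j = 0")
    case True
    have "\<bar>dphi0 \<phi>\<bar> \<noteq> \<infinity>" using X True unfolding target_set_def
      by (auto split: if_splits; metis less_irrefl)
    thus ?thesis using zero_int[OF B] True by simp
  next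
    case F0: False
    show ?thesis
    proof (cases "X i j = 1")
      case True
      have "\<bar>dphi1 \<phi>\<bar> \<noteq> \<infinity>" using X True unfolding target_set_def
        by (auto split: if_splits; metis less_irrefl)
      thus ?thesis using one_int[OF B] True by simp
    next
      case False
      thus ?thesis using F0 e sub by force
    qed
  qed
qed

lemma reg_obj_fin:
  fixes Y C :: "'n::finite \<Rightarrow> 'n \<Rightarrow> real"
  assumes B: "bregman_assumption \<phi>" and Y: "\<And>i j. Y i j \<in> edom \<phi>"
  shows "reg_obj \<phi> \<gamma> C Y = ereal ((\<Sum>i\<in>UNIV. \<Sum>j\<in>UNIV. C i j * Y i j)
      + \<gamma> * (\<Sum>i\<in>UNIV. \<Sum>j\<in>UNIV. rphi \<phi> (Y i j)))"
proof -
  have "(\<Sum>i\<in>UNIV. \<Sum>j\<in>UNIV. \<phi> (Y i j)) = (\<Sum>i\<in>UNIV. \<Sum>j\<in>UNIV. ereal (rphi \<phi> (Y i j)))"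
    using phi_eq[OF B Y] by simp
  also have "\<dots> = ereal (\<Sum>i\<in>UNIV. \<Sum>j\<in>UNIV. rphi \<phi> (Y i j))" by simp
  finally show ?thesis unfolding reg_obj_def by simp
qed

lemma reg_obj_inf:
  fixes Y C :: "'n::finite \<Rightarrow> 'n \<Rightarrow> real"
  assumes g: "\<gamma> > 0" and Y: "Y i j \<notin> edom \<phi>"
  shows "reg_obj \<phi> \<gamma> C Y = \<infinity>"
proof -
  have "\<phi> (Y i j) = \<infinity>" using Y unfolding edom_def by auto
  hence "(\<Sum>j\<in>UNIV. \<phi> (Y i j)) = \<infinity>" by (auto simp: sum_Pinfty)
  hence "(\<Sum>i\<in>UNIV. \<Sum>j\<in>UNIV. \<phi> (Y i j)) = \<infinity>" by (auto simp: sum_Pinfty)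
  thus ?thesis unfolding reg_obj_def using g by simp
qed

theorem proposition1:
  fixes \<mu> \<nu> :: "'n::finite \<Rightarrow> real" and \<gamma> :: real and \<phi> :: "real \<Rightarrow> ereal"
  assumes "prob_vec \<mu>" and "prob_vec \<nu>" and "\<gamma> > 0"
    and "bregman_assumption \<phi>"
    and "Xh \<in> target_set \<phi> \<mu> \<nu>"
  shows "\<exists>C::'n \<Rightarrow> 'n \<Rightarrow> real. (\<forall>i j. 0 \<le> C i j) \<and> Fmap \<phi> \<gamma> \<mu> \<nu> C = Xh"
proof -
  note B = assms(4) and g = assms(3)
  let ?U = "transport_polytope \<mu> \<nu>"
  let ?r = "rphi \<phi>"
  let ?d = "deriv (rphi \<phi>)"
  have XU: "Xh \<in> ?U" by (rule target_int(1)[OF B assms(1,5)])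
  have XI: "\<And>i j. Xh i j \<in> interior (edom \<phi>)" by (rule target_int(2)[OF B assms(1,5)])
  hence XD: "\<And>i j. Xh i j \<in> edom \<phi>" using interior_subset by blast
  define K where "K = \<gamma> * (\<Sum>i\<in>UNIV. \<Sum>j\<in>UNIV. \<bar>?d (Xh i j)\<bar>)"
  define C where "C = (\<lambda>i j. K - \<gamma> * ?d (Xh i j))"
  have Cnn: "\<forall>i j. 0 \<le> C i j"
  proof (intro allI)
    fix i j
    have "\<bar>?d (Xh i j)\<bar> \<le> (\<Sum>j\<in>UNIV. \<bar>?d (Xh i j)\<bar>)" by (rule member_le_sum) auto
    also have "\<dots> \<le> (\<Sum>i\<in>UNIV. \<Sum>j\<in>UNIV. \<bar>?d (Xh i j)\<bar>)"
      by (rule member_le_sum) (auto intro: sum_nonneg)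
    finally have "?d (Xh i j) \<le> (\<Sum>i\<in>UNIV. \<Sum>j\<in>UNIV. \<bar>?d (Xh i j)\<bar>)" by simp
    thus "0 \<le> C i j" unfolding C_def K_def using g by (simp add: algebra_simps)
  qed
  have fX: "reg_obj \<phi> \<gamma> C Xh = ereal ((\<Sum>i\<in>UNIV. \<Sum>j\<in>UNIV. C i j * Xh i j)
      + \<gamma> * (\<Sum>i\<in>UNIV. \<Sum>j\<in>UNIV. ?r (Xh i j)))" by (rule reg_obj_fin[OF B XD])
  have strict: "reg_obj \<phi> \<gamma> C Xh < reg_obj \<phi> \<gamma> C Y" if YU: "Y \<in> ?U" and ne: "Y \<noteq> Xh" for Y
  proof (cases "\<forall>i j. Y i j \<in> edom \<phi>")
    case False
    then obtain i j where "Y i j \<notin> edom \<phi>" by blast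
    hence "reg_obj \<phi> \<gamma> C Y = \<infinity>" by (rule reg_obj_inf[OF g])
    thus ?thesis unfolding fX by simp
  next
    case True
    have fY: "reg_obj \<phi> \<gamma> C Y = ereal ((\<Sum>i\<in>UNIV. \<Sum>j\<in>UNIV. C i j * Y i j)
      + \<gamma> * (\<Sum>i\<in>UNIV. \<Sum>j\<in>UNIV. ?r (Y i j)))" by (rule reg_obj_fin[OF B]) (use True in blast)
    define T where "T = (\<lambda>i j. C i j * Y i j + \<gamma> * ?r (Y i j) - (C i j * Xh i j + \<gamma> * ?r (Xh i j)))"
    define L where "L = (\<lambda>i j. K * (Y i j - Xh i j))"
    have le: "L i j \<le> T i j" for i j
    proof (cases "Y i j = Xh i j")
      case True thus ?thesis unfolding L_def T_def by simp
    next
      case False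
      have "?d (Xh i j) * (Y i j - Xh i j) < ?r (Y i j) - ?r (Xh i j)"
        by (rule strict_dom[OF B XI]) (use True False in auto)
      hence "\<gamma> * (?d (Xh i j) * (Y i j - Xh i j)) < \<gamma> * (?r (Y i j) - ?r (Xh i j))"
        using g by simp
      thus ?thesis unfolding L_def T_def C_def by (simp add: algebra_simps)
    qed
    obtain i0 j0 where ij: "Y i0 j0 \<noteq> Xh i0 j0" using ne by blast
    have lt: "L i0 j0 < T i0 j0"
    proof -
      have "?d (Xh i0 j0) * (Y i0 j0 - Xh i0 j0) < ?r (Y i0 j0) - ?r (Xh i0 j0)"
        by (rule strict_dom[OF B XI]) (use True ij in auto)
      hence "\<gamma> * (?d (Xh i0 j0) * (Y i0 j0 - Xh i0 j0)) < \<gamma> * (?r (Y i0 j0) - ?r (Xh i0 j0))"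
        using g by simp
      thus ?thesis unfolding L_def T_def C_def by (simp add: algebra_simps)
    qed
    have inner: "(\<Sum>j\<in>UNIV. L i j) \<le> (\<Sum>j\<in>UNIV. T i j)" for i
      by (rule sum_mono) (rule le)
    have inner0: "(\<Sum>j\<in>UNIV. L i0 j) < (\<Sum>j\<in>UNIV. T i0 j)"
      by (rule sum_strict_mono_ex1) (use le lt in auto)
    have sumlt: "(\<Sum>i\<in>UNIV. \<Sum>j\<in>UNIV. L i j) < (\<Sum>i\<in>UNIV. \<Sum>j\<in>UNIV. T i j)"
      by (rule sum_strict_mono_ex1) (use inner inner0 in auto)
    have rowY: "\<And>i. (\<Sum>j\<in>UNIV. Y i j) = \<mu> i" and rowX: "\<And>i. (\<Sum>j\<in>UNIV. Xh i j) = \<mu> i"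
      using YU XU unfolding transport_polytope_def by auto
    have "(\<Sum>i\<in>UNIV. \<Sum>j\<in>UNIV. L i j) = K * ((\<Sum>i\<in>UNIV. \<Sum>j\<in>UNIV. Y i j) - (\<Sum>i\<in>UNIV. \<Sum>j\<in>UNIV. Xh i j))"
      unfolding L_def by (simp add: sum_distrib_left sum_subtractf right_diff_distrib)
    also have "\<dots> = 0" by (simp add: rowY rowX)
    finally have L0: "(\<Sum>i\<in>UNIV. \<Sum>j\<in>UNIV. L i j) = 0" .
    have "(\<Sum>i\<in>UNIV. \<Sum>j\<in>UNIV. T i j) =
       ((\<Sum>i\<in>UNIV. \<Sum>j\<in>UNIV. C i j * Y i j) + \<gamma> * (\<Sum>i\<in>UNIV. \<Sum>j\<in>UNIV. ?r (Y i j)))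
       - ((\<Sum>i\<in>UNIV. \<Sum>j\<in>UNIV. C i j * Xh i j) + \<gamma> * (\<Sum>i\<in>UNIV. \<Sum>j\<in>UNIV. ?r (Xh i j)))"
      unfolding T_def by (simp add: sum_subtractf sum.distrib sum_distrib_left)
    with sumlt L0 show ?thesis unfolding fX fY by simp
  qed
  have "Fmap \<phi> \<gamma> \<mu> \<nu> C = Xh"
    unfolding Fmap_def
  proof (rule the_equality)
    show "Xh \<in> ?U \<and> (\<forall>Y\<in>?U. reg_obj \<phi> \<gamma> C Xh \<le> reg_obj \<phi> \<gamma> C Y)"
      using XU strict by (metis order.strict_implies_order order_refl)
  next
    fix Y assume Y: "Y \<in> ?U \<and> (\<forall>Z\<in>?U. reg_obj \<phi> \<gamma> C Y \<le> reg_obj \<phi> \<gamma> C Z)"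
    show "Y = Xh"
    proof (rule ccontr)
      assume "Y \<noteq> Xh"
      hence "reg_obj \<phi> \<gamma> C Xh < reg_obj \<phi> \<gamma> C Y" using strict Y by blast
      moreover have "reg_obj \<phi> \<gamma> C Y \<le> reg_obj \<phi> \<gamma> C Xh" using Y XU by blast
      ultimately show False by simp
    qed
  qed
  with Cnn show ?thesis by blast
qed

end
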